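(* Let $q \ge 2$ be a fixed integer and let $\Sigma$ be an alphabet with $|\Sigma| = q$. There exist constants $c > 0$ and $n_0$ (which may depend on $q$) such that for every integer $n \ge n_0$, the number of privileged words of length $n$ over $\Sigma$ is at least \[ \frac{c\, q^n}{n (\log_q n)^2}. \]
   Context: A border of a word $w$ is a non-empty word that is both a prefix and a suffix of $w$. A word $w$ is privileged if either $|w| \le 1$, or $|w| \ge 2$ and $w$ has a border $u$ which is itself privileged and which occurs exactly twice as a factor (contiguous subword) of $w$ (i.e., only as the prefix and as the suffix, these being two distinct occurrences). The claim is meant for fixed $q$, with the constants allowed to depend on $q$. *)

theory Defs
  imports Complex_Main "HOL-Library.Sublist"
begin

definition is_border :: "'a list \<Rightarrow> 'a list \<Rightarrow> bool" where
  "is_border u w \<longleftrightarrow> u \<noteq> [] \<and> prefix u w \<and> suffix u w"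

definition occ_count :: "'a list \<Rightarrow> 'a list \<Rightarrow> nat" where
  "occ_count u w = card {i. i + length u \<le> length w \<and> take (length u) (drop i w) = u}"

function privileged :: "'a list \<Rightarrow> bool" where
  "privileged w \<longleftrightarrow> length w \<le> 1 \<or>
     (\<exists>u\<in>{u. length u < length w}. is_border u w \<and> privileged u \<and> occ_count u w = 2)"
  by auto
termination
  by (relation "measure length") auto

end

theory Submission imports Defs begin

declare privileged.simps[simp del]

lemma finite_len: "finite {v::'a::finite list. length v = m}"
  using finite_lists_length_eq[of "UNIV::'a set" m] by simp

lemma card_len: "card {v::'a::finite list. length v = m} = card (UNIV::'a set)^m"
  using card_lists_length_eq[of "UNIV::'a set" m] by simp

lemma card_fixed:
  "J \<subseteq> {..<m} \<Longrightarrow> card {v::'a::finite list. length v = m \<and> (\<forall>j\<in>J. v!j = f j)} = card (UNIV::'a set)^(m - card J)"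
proof (induction m arbitrary: J f)
  case 0
  then have "J = {}" by auto
  then show ?case by simp
next
  case (Suc m)
  define J' where "J' = {j. Suc j \<in> J}"
  define X where "X = (if 0 \<in> J then {f 0} else (UNIV::'a set))"
  define V where "V = {v::'a list. length v = m \<and> (\<forall>j\<in>J'. v!j = (f \<circ> Suc) j)}"
  have J'sub: "J' \<subseteq> {..<m}" using Suc.prems unfolding J'_def by auto
  have cV: "card V = card (UNIV::'a set)^(m - card J')" unfolding V_def using Suc.IH[OF J'sub] by simp
  have eq: "{v::'a list. length v = Suc m \<and> (\<forall>j\<in>J. v!j = f j)} = (\<lambda>(x,v). x#v) ` (X \<times> V)"
  proof (rule set_eqI, rule iffI)
    fix v assume "v \<in> {v::'a list. length v = Suc m \<and> (\<forall>j\<in>J. v!j = f j)}"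
    then obtain x w where v: "v = x # w" and lw: "length w = m" and H: "\<forall>j\<in>J. v!j = f j"
      by (auto simp: length_Suc_conv)
    have "x \<in> X" using H v unfolding X_def by auto
    moreover have "w \<in> V" using H v lw unfolding V_def J'_def by auto
    ultimately show "v \<in> (\<lambda>(x,v). x#v) ` (X \<times> V)" using v by auto
  next
    fix v assume "v \<in> (\<lambda>(x,v). x#v) ` (X \<times> V)"
    then obtain x w where v: "v = x # w" and x: "x \<in> X" and w: "w \<in> V" by auto
    have "\<forall>j\<in>J. v!j = f j"
    proof
      fix j assume j: "j \<in> J"
      show "v!j = f j"
      proof (cases j)
        case 0 then show ?thesis using x j v unfolding X_def by auto
      next
        case (Suc i) then show ?thesis using w j v unfolding V_def J'_def by auto
      qed
    qed
    then show "v \<in> {v::'a list. length v = Suc m \<and> (\<forall>j\<in>J. v!j = f j)}" using v w unfolding V_def by auto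
  qed
  have inj: "inj_on (\<lambda>(x,v). x#v) (X \<times> V)" by (auto simp: inj_on_def)
  have finV: "finite V" using finite_len[of m] unfolding V_def by (auto intro: finite_subset)
  have c1: "card {v::'a list. length v = Suc m \<and> (\<forall>j\<in>J. v!j = f j)} = card X * card V"
    using eq card_image[OF inj] card_cartesian_product by metis
  have JJ: "J = Suc ` J' \<union> (if 0 \<in> J then {0} else {})"
  proof (rule set_eqI)
    fix x show "x \<in> J \<longleftrightarrow> x \<in> Suc ` J' \<union> (if 0 \<in> J then {0} else {})"
      by (cases x) (auto simp: J'_def)
  qed
  have fJ': "finite J'" using J'sub finite_subset by blast
  have cJ: "card J = card J' + (if 0 \<in> J then 1 else 0)"
  proof -
    have "card (Suc ` J') = card J'" by (simp add: card_image)
    moreover have "0 \<notin> Suc ` J'" by auto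
    ultimately show ?thesis using JJ fJ' by (subst JJ) (auto simp: card_insert_if)
  qed
  have cJ'm: "card J' \<le> m" using card_mono[OF _ J'sub] by simp
  show ?case
  proof (cases "0 \<in> J")
    case True
    then show ?thesis using c1 cV cJ by (simp add: X_def)
  next
    case False
    then have "Suc m - card J = Suc (m - card J')" using cJ cJ'm by simp
    then show ?thesis using c1 cV cJ False by (simp add: X_def)
  qed
qed

lemma take_drop_nth:
  assumes "p + length u \<le> length w"
  shows "take (length u) (drop p w) = u \<longleftrightarrow> (\<forall>i<length u. w!(p+i) = u!i)"
  using assms by (auto simp: list_eq_iff_nth_eq)

lemma occ_set:
  assumes L: "length u = L" and k1: "1 \<le> k" "k \<le> L"
    and pre: "take k u = replicate k a" and suf: "drop (L-k) u = replicate k a"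
    and v: "v = b # w @ [b]" and b: "b \<noteq> a"
    and none: "\<forall>p\<in>{k+1..<L + length v - k}. take L (drop p (u@v@u)) \<noteq> u"
  shows "{i. i + L \<le> length (u@v@u) \<and> take L (drop i (u@v@u)) = u} = {0, L + length v}"
proof -
  define m where "m = length v"
  have m2: "m \<ge> 2" using v m_def by simp
  have ua1: "u!j = a" if "j < k" for j
  proof -
    have "take k u ! j = u ! j" using that by simp
    then show ?thesis using pre that by simp
  qed
  have ua2: "u!(L-k+j) = a" if "j < k" for j
  proof -
    have "drop (L-k) u ! j = u ! (L-k+j)" using that L k1 by (simp add: nth_drop)
    then show ?thesis using suf that by simp
  qed
  have v0: "v!0 = b" using v by simp
  have vl: "v!(m-1) = b" using v m_def by (simp add: nth_append)
  let ?w = "u@v@u"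
  have lw: "length ?w = 2*L + m" using L m_def by simp
  have w1: "?w!(L+j) = v!j" if "j < m" for j using that L m_def by (simp add: nth_append)
  show ?thesis
  proof (rule set_eqI, rule iffI)
    fix i assume "i \<in> {i. i + L \<le> length ?w \<and> take L (drop i ?w) = u}"
    then have i1: "i + L \<le> 2*L+m" and occ: "take L (drop i ?w) = u" using lw by auto
    have occn: "\<forall>j<L. ?w!(i+j) = u!j" using take_drop_nth[of i u ?w] occ i1 L lw by simp
    have "i \<in> {0, L + m}"
    proof (rule ccontr)
      assume ni: "i \<notin> {0, L+m}"
      show False
      proof (cases "i \<le> k")
        case True
        have "L - i < L" using ni True k1 by auto
        then have "?w!(i + (L-i)) = u!(L-i)" using occn by blast
        moreover have "?w!(i+(L-i)) = b" using w1[of 0] v0 m2 True k1 by simp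
        moreover have "u!(L-i) = a" using ua2[of "k - i"] True ni k1 by simp
        ultimately show False using b by simp
      next
        case False
        show False
        proof (cases "i \<ge> L + m - k")
          case True
          have ilt: "i < L + m" using i1 ni by auto
          have "L+m-1-i < L" using ilt True k1 False by auto
          then have "?w!(i + (L+m-1-i)) = u!(L+m-1-i)" using occn by blast
          moreover have "?w!(i + (L+m-1-i)) = b" using w1[of "m-1"] vl m2 ilt by simp
          moreover have "u!(L+m-1-i) = a" using ua1 True ilt k1 by auto
          ultimately show False using b by simp
        next
          case False2: False
          then have "i \<in> {k+1..<L + length v - k}" using False m_def by auto
          then show False using none occ by auto
        qed
      qed
    qed
    then show "i \<in> {0, L + length v}" using m_def by simp
  next
    fix i assume "i \<in> {0, L + length v}"
    then show "i \<in> {i. i + L \<le> length ?w \<and> take L (drop i ?w) = u}"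
      using L by auto
  qed
qed

lemma priv_uvu:
  assumes "privileged u" "u \<noteq> []"
    and "card {i. i + length u \<le> length (u@v@u) \<and> take (length u) (drop i (u@v@u)) = u} = 2"
  shows "privileged (u@v@u)"
proof -
  have "is_border u (u@v@u)" using assms(2) unfolding is_border_def
    by (metis Sublist.suffix_def append.assoc prefix_def)
  moreover have "occ_count u (u@v@u) = 2" using assms(3) unfolding occ_count_def by simp
  moreover have "length u < length (u@v@u)" using assms(2) by simp
  ultimately show ?thesis using assms(1) by (subst privileged.simps) blast
qed

lemma priv_rep: "privileged (replicate k a)"
proof (induction k)
  case 0 then show ?case by (subst privileged.simps) simp
next
  case (Suc k)
  show ?case
  proof (cases "k = 0")
    case True then show ?thesis by (subst privileged.simps) simp
  next
    case False
    have oc: "{i. i + k \<le> Suc k \<and> take k (drop i (replicate (Suc k) a)) = replicate k a} = {0,1}"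
    proof -
      have e: "take k (drop i (replicate (Suc k) a)) = replicate (min k (Suc k - i)) a" for i
        by (simp only: drop_replicate take_replicate)
      show ?thesis unfolding e using False by (auto simp: min_def)
    qed
    have "occ_count (replicate k a) (replicate (Suc k) a) = 2"
      unfolding occ_count_def using oc by simp
    moreover have "is_border (replicate k a) (replicate (Suc k) a)"
    proof -
      have "replicate (Suc k) a = replicate k a @ [a]" by (simp add: replicate_append_same)
      moreover have "replicate (Suc k) a = [a] @ replicate k a" by simp
      moreover have "replicate k a \<noteq> []" using False by simp
      ultimately show ?thesis unfolding is_border_def prefix_def suffix_def by blast
    qed
    ultimately show ?thesis using Suc.IH by (subst privileged.simps) auto
  qed
qed

definition Good :: "'a list \<Rightarrow> nat \<Rightarrow> 'a \<Rightarrow> nat \<Rightarrow> 'a list set" where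
  "Good u k b m = {v \<in> (\<lambda>w. b # w @ [b]) ` {w. length w = m - 2}.
     \<forall>p\<in>{k+1..<length u + m - k}. take (length u) (drop p (u@v@u)) \<noteq> u}"

lemma good_priv:
  assumes "privileged u" and L: "length u = L" and k1: "1 \<le> k" "k \<le> L"
    and pre: "take k u = replicate k a" and suf: "drop (L-k) u = replicate k a"
    and b: "b \<noteq> a" and m2: "2 \<le> m" and v: "v \<in> Good u k b m"
  shows "privileged (u@v@u) \<and> length v = m"
proof -
  have v1: "v \<in> (\<lambda>w. b # w @ [b]) ` {w. length w = m - 2}"
    and none0: "\<forall>p\<in>{k+1..<length u + m - k}. take (length u) (drop p (u@v@u)) \<noteq> u"
    using v unfolding Good_def by blast+
  obtain w where vw: "v = b # w @ [b]" and lw: "length w = m - 2" using v1 by blast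
  have none: "\<forall>p\<in>{k+1..<L + m - k}. take L (drop p (u@v@u)) \<noteq> u"
    using none0 by (simp only: L)
  have lv: "length v = m" using vw lw m2 by simp
  have "{i. i + L \<le> length (u@v@u) \<and> take L (drop i (u@v@u)) = u} = {0, L + length v}"
    by (rule occ_set[OF L k1 pre suf vw b]) (use none in \<open>simp only: lv\<close>)
  moreover have "L + length v \<noteq> 0" using lv m2 by simp
  ultimately have c: "card {i. i + length u \<le> length (u@v@u) \<and> take (length u) (drop i (u@v@u)) = u} = 2"
    using L by simp
  have "u \<noteq> []" using L k1 by auto
  then show ?thesis using priv_uvu[OF assms(1) _ c] lv by simp
qed

lemma good_card:
  fixes u :: "'a::finite list"
  assumes L: "length u = L" and k1: "1 \<le> k" and km: "k + 1 \<le> m" and Lm: "L \<le> m" and m2: "2 \<le> m"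
  shows "card (UNIV::'a set)^(m-2) \<le> card (Good u k b m)
           + (2*L*card (UNIV::'a set)^(m-k-1) + (m+1)*card (UNIV::'a set)^(m-L))"
proof -
  let ?q = "card (UNIV::'a set)"
  define S where "S = (\<lambda>w. b # w @ [b]) ` {w::'a list. length w = m - 2}"
  define P where "P = {k+1..<L + m - k}"
  define Bad where "Bad p = {v::'a list. length v = m \<and> take L (drop p (u@v@u)) = u}" for p
  define J where "J p = {p-L..<min m p}" for p
  have cS: "card S = ?q^(m-2)"
  proof -
    have "inj_on (\<lambda>w. b # w @ [b]) {w::'a list. length w = m - 2}" by (auto simp: inj_on_def)
    then show ?thesis unfolding S_def by (simp add: card_image card_len)
  qed
  have finS: "finite S" unfolding S_def using finite_len by blast
  have sub: "S \<subseteq> Good u k b m \<union> (\<Union>p\<in>P. Bad p)"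
  proof
    fix v assume vS: "v \<in> S"
    then have lv: "length v = m" unfolding S_def using m2 by auto
    show "v \<in> Good u k b m \<union> (\<Union>p\<in>P. Bad p)"
    proof (cases "\<forall>p\<in>P. take L (drop p (u@v@u)) \<noteq> u")
      case True then show ?thesis using vS L unfolding Good_def S_def P_def by auto
    next
      case False then show ?thesis using lv unfolding Bad_def by auto
    qed
  qed
  have finB: "finite (Bad p)" for p unfolding Bad_def by (rule finite_subset[OF _ finite_len[of m]]) blast
  have finG: "finite (Good u k b m)" unfolding Good_def by (rule finite_subset[OF _ finS]) (auto simp: S_def)
  have "card S \<le> card (Good u k b m \<union> (\<Union>p\<in>P. Bad p))"
    by (rule card_mono[OF _ sub]) (use finG finB P_def in auto)
  also have "\<dots> \<le> card (Good u k b m) + card (\<Union>p\<in>P. Bad p)" by (rule card_Un_le)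
  also have "card (\<Union>p\<in>P. Bad p) \<le> (\<Sum>p\<in>P. card (Bad p))" by (rule card_UN_le) (simp add: P_def)
  also have "(\<Sum>p\<in>P. card (Bad p)) \<le> (\<Sum>p\<in>P. ?q^(m - card (J p)))"
  proof (rule sum_mono)
    fix p assume pP: "p \<in> P"
    have Jsub: "J p \<subseteq> {..<m}" unfolding J_def by auto
    have "Bad p \<subseteq> {v. length v = m \<and> (\<forall>j\<in>J p. v!j = u!(L+j-p))}"
    proof
      fix v assume "v \<in> Bad p"
      then have lv: "length v = m" and occ: "take L (drop p (u@v@u)) = u" unfolding Bad_def by auto
      have pl: "p + length u \<le> length (u@v@u)" using pP lv L unfolding P_def by auto
      have occn: "\<forall>i<L. (u@v@u)!(p+i) = u!i" using take_drop_nth[OF pl] occ L by simp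
      have "v!j = u!(L+j-p)" if j: "j \<in> J p" for j
      proof -
        have j1: "p - L \<le> j" "j < m" "j < p" using j unfolding J_def by auto
        have "L+j-p < L" using j1 by auto
        then have "(u@v@u)!(p+(L+j-p)) = u!(L+j-p)" using occn by blast
        moreover have "p+(L+j-p) = L+j" using j1 by auto
        moreover have "(u@v@u)!(L+j) = v!j" using j1 lv L by (simp add: nth_append)
        ultimately show ?thesis by simp
      qed
      then show "v \<in> {v. length v = m \<and> (\<forall>j\<in>J p. v!j = u!(L+j-p))}" using lv by auto
    qed
    moreover have "finite {v::'a list. length v = m \<and> (\<forall>j\<in>J p. v!j = u!(L+j-p))}"
      by (rule finite_subset[OF _ finite_len[of m]]) auto
    ultimately have "card (Bad p) \<le> card {v::'a list. length v = m \<and> (\<forall>j\<in>J p. v!j = u!(L+j-p))}"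
      by (simp add: card_mono)
    also have "\<dots> = ?q^(m - card (J p))" by (rule card_fixed[OF Jsub])
    finally show "card (Bad p) \<le> ?q^(m - card (J p))" .
  qed
  also have "(\<Sum>p\<in>P. ?q^(m - card (J p))) \<le> 2*L*?q^(m-k-1) + (m+1)*?q^(m-L)"
  proof -
    define P1 where "P1 = {p\<in>P. p < L \<or> m < p}"
    define P2 where "P2 = {p\<in>P. L \<le> p \<and> p \<le> m}"
    have q1: "?q \<ge> 1" by (simp add: Suc_le_eq card_gt_0_iff)
    have PP: "P = P1 \<union> P2" unfolding P1_def P2_def by auto
    have fP1: "finite P1" and fP2: "finite P2" unfolding P1_def P2_def P_def by auto
    have dis: "P1 \<inter> P2 = {}" unfolding P1_def P2_def by auto
    have b1: "?q^(m - card (J p)) \<le> ?q^(m-k-1)" if "p \<in> P1" for p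
    proof -
      have "p \<in> P" "p < L \<or> m < p" using that unfolding P1_def by auto
      then have "card (J p) \<ge> k + 1" unfolding J_def P_def using Lm by auto
      then show "?q^(m - card (J p)) \<le> ?q^(m-k-1)" by (intro power_increasing q1) auto
    qed
    have s1: "(\<Sum>p\<in>P1. ?q^(m - card (J p))) \<le> card P1 * ?q^(m-k-1)"
      using sum_bounded_above[of P1 "\<lambda>p. ?q^(m - card (J p))" "?q^(m-k-1)"] b1 by simp
    have b2: "?q^(m - card (J p)) \<le> ?q^(m-L)" if "p \<in> P2" for p
    proof -
      have "L \<le> p" "p \<le> m" using that unfolding P2_def by auto
      then have "card (J p) = L" unfolding J_def by auto
      then show "?q^(m - card (J p)) \<le> ?q^(m-L)" by simp
    qed
    have s2: "(\<Sum>p\<in>P2. ?q^(m - card (J p))) \<le> card P2 * ?q^(m-L)"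
      using sum_bounded_above[of P2 "\<lambda>p. ?q^(m - card (J p))" "?q^(m-L)"] b2 by simp
    have c1: "card P1 \<le> 2*L"
    proof -
      have "P1 \<subseteq> {..<L} \<union> {m<..<L+m}" unfolding P1_def P_def by auto
      then have "card P1 \<le> card ({..<L} \<union> {m<..<L+m})" by (rule card_mono[rotated]) auto
      also have "\<dots> \<le> card {..<L::nat} + card {m<..<L+m}" by (rule card_Un_le)
      also have "\<dots> \<le> 2*L" by simp
      finally show ?thesis .
    qed
    have c2: "card P2 \<le> m+1"
    proof -
      have "P2 \<subseteq> {..m}" unfolding P2_def by auto
      then have "card P2 \<le> card {..m}" by (rule card_mono[rotated]) auto
      then show ?thesis by simp
    qed
    have "(\<Sum>p\<in>P. ?q^(m - card (J p))) = (\<Sum>p\<in>P1. ?q^(m - card (J p))) + (\<Sum>p\<in>P2. ?q^(m - card (J p)))"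
      unfolding PP by (rule sum.union_disjoint[OF fP1 fP2 dis])
    also have "\<dots> \<le> card P1 * ?q^(m-k-1) + card P2 * ?q^(m-L)" using s1 s2 by simp
    also have "\<dots> \<le> 2*L*?q^(m-k-1) + (m+1)*?q^(m-L)"
      using c1 c2 by (intro add_mono mult_right_mono) auto
    finally show ?thesis .
  qed
  finally show ?thesis using cS by simp
qed

lemma good_half:
  fixes u :: "'a::finite list"
  assumes L: "length u = L" and k1: "1 \<le> k" and km: "k + 1 \<le> m" and L2: "2 \<le> L" and Lm: "L \<le> m"
    and c1: "8*L*card (UNIV::'a set) \<le> card (UNIV::'a set)^k"
    and c2: "4*(m+1)*card (UNIV::'a set)^2 \<le> card (UNIV::'a set)^L"
  shows "card (UNIV::'a set)^(m-2) \<le> 2 * card (Good u k b m)"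
proof -
  let ?q = "card (UNIV::'a set)"
  have q1: "?q \<ge> 1" by (simp add: Suc_le_eq card_gt_0_iff)
  have base: "?q^(m-2) \<le> card (Good u k b m) + (2*L*?q^(m-k-1) + (m+1)*?q^(m-L))"
    by (rule good_card[OF L k1 km Lm]) (use km k1 in simp)
  have e1: "?q^(m-2) = ?q^(k-1) * ?q^(m-k-1)"
    using km k1 by (simp add: power_add[symmetric])
  have "?q * (8*L) \<le> ?q * ?q^(k-1)"
    using c1 k1 by (simp add: power_eq_if[of ?q k] algebra_simps split: if_splits)
  then have "8*L \<le> ?q^(k-1)" using q1 by simp
  then have t1: "4*(2*L*?q^(m-k-1)) \<le> ?q^(m-2)" unfolding e1 by (simp add: mult_right_mono)
  have e2: "?q^(m-2) = ?q^(L-2) * ?q^(m-L)"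
    using Lm L2 by (simp add: power_add[symmetric])
  have e3: "?q^L = ?q^2 * ?q^(L-2)" using L2 by (metis le_add_diff_inverse power_add)
  have "?q^2 * (4*(m+1)) \<le> ?q^2 * ?q^(L-2)" using c2 e3 by (simp add: algebra_simps)
  then have "4*(m+1) \<le> ?q^(L-2)" using q1 by simp
  then have "(4*(m+1))*?q^(m-L) \<le> ?q^(L-2)*?q^(m-L)" by (rule mult_right_mono) simp
  then have t2: "4*((m+1)*?q^(m-L)) \<le> ?q^(m-2)" unfolding e2 by (simp only: mult.assoc)
  show ?thesis using base t1 t2 by linarith
qed

lemma exp1: "7 \<le> s \<Longrightarrow> 3*s+16 \<le> (2::nat)^s"
  by (induction s rule: dec_induct) auto

lemma exp2: "6 \<le> t \<Longrightarrow> 3*t+15 \<le> (2::nat)^t"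
  by (induction t rule: dec_induct) auto

lemma floorlog:
  fixes q n :: nat
  assumes "2 \<le> q" "1 \<le> n"
  shows "\<exists>t. q^t \<le> n \<and> n < q^(t+1)"
proof -
  define t where "t = (LEAST t. n < q^(t+1))"
  have ex: "n < q^(n+1)"
  proof -
    have "n < 2^n" by (rule less_exp)
    also have "\<dots> \<le> q^n" using assms by (simp add: power_mono)
    also have "\<dots> \<le> q^(n+1)" using assms by (simp add: power_increasing)
    finally show ?thesis .
  qed
  have t1: "n < q^(t+1)" unfolding t_def by (rule LeastI[of _ n]) (rule ex)
  have t2: "q^t \<le> n"
  proof (cases t)
    case 0 then show ?thesis using assms by simp
  next
    case (Suc t')
    then have "t' < t" by simp
    then have "\<not> n < q^(t'+1)" unfolding t_def by (rule not_less_Least)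
    then show ?thesis using Suc by simp
  qed
  show ?thesis using t1 t2 by blast
qed

theorem theorem1:
  fixes \<Sigma> :: "'a::finite itself"
  assumes "card (UNIV :: 'a set) \<ge> 2"
  shows "\<exists>c::real. c > 0 \<and> (\<exists>n0::nat. \<forall>n\<ge>n0.
           real (card {w :: 'a list. length w = n \<and> privileged w})
             \<ge> c * real (card (UNIV :: 'a set)) ^ n / (real n * (log (real (card (UNIV :: 'a set))) (real n))\<^sup>2))"
proof -
  define q where "q = card (UNIV :: 'a set)"
  have q2: "2 \<le> q" using assms q_def by simp
  obtain a :: 'a where True by blast
  obtain b :: 'a where ba: "b \<noteq> a"
  proof -
    have "\<exists>b::'a. b \<noteq> a"
    proof (rule ccontr)
      assume "\<not> (\<exists>b::'a. b \<noteq> a)"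
      then have "(UNIV::'a set) = {a}" by auto
      then have "card (UNIV::'a set) = card {a}" by (rule arg_cong)
      then show False using q2 q_def by simp
    qed
    then show ?thesis using that by blast
  qed
  define c :: real where "c = 1 / (144 * real q^19)"
  have cpos: "c > 0" using q2 unfolding c_def by simp
  have main: "real (card {w :: 'a list. length w = n \<and> privileged w})
             \<ge> c * real q ^ n / (real n * (log (real q) (real n))\<^sup>2)" if nn0: "n \<ge> q^30" for n
  proof -
    have n1: "1 \<le> n" using nn0 q2 by (metis le_trans one_le_power Suc_leD numeral_le_iff semiring_norm(69) le_numeral_extra(4) one_le_numeral)
    obtain t where t1: "q^t \<le> n" and t2: "n < q^(t+1)" using floorlog[OF q2 n1] by blast
    have t29: "29 \<le> t"
    proof -
      have h: "q^30 < q^(t+1)" using nn0 t2 by simp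
      have q1': "1 < q" using q2 by simp
      have "30 < t+1" using power_less_imp_less_exp[OF q1' h] .
      then show ?thesis by simp
    qed
    define l where "l = t + 5"
    obtain s where s1: "q^s \<le> l" and s2: "l < q^(s+1)" using floorlog[OF q2, of l] l_def by auto
    define k where "k = s + 5"
    have lk: "3*k + 1 \<le> l"
    proof (cases "s \<le> 6")
      case True then show ?thesis using t29 unfolding k_def l_def by simp
    next
      case False
      have "3*s+16 \<le> 2^s" using False by (intro exp1) simp
      also have "\<dots> \<le> q^s" using q2 by (simp add: power_mono)
      finally show ?thesis using s1 unfolding k_def l_def by simp
    qed
    have nl: "3*l \<le> n"
    proof -
      have "3*t+15 \<le> 2^t" using t29 by (intro exp2) simp
      also have "\<dots> \<le> q^t" using q2 by (simp add: power_mono)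
      finally show ?thesis using t1 unfolding l_def by simp
    qed
    define m1 where "m1 = l - 2*k"
    define m where "m = n - 2*l"
    have q1: "1 \<le> q" using q2 by simp
    have qk: "q^4 * l \<le> q^k"
    proof -
      have "k = 4 + (s+1)" unfolding k_def by simp
      then have "q^k = q^4 * q^(s+1)" by (metis power_add)
      then show ?thesis using s2 by simp
    qed
    have ql: "q^4 * n \<le> q^l"
    proof -
      have "l = 4 + (t+1)" unfolding l_def by simp
      then have "q^l = q^4 * q^(t+1)" by (metis power_add)
      then show ?thesis using t2 by simp
    qed
    have q8: "8 * q \<le> q^4"
    proof -
      have "8 \<le> q^3" using power_mono[OF q2, of 3] by simp
      then have "q * 8 \<le> q * q^3" by simp
      then show ?thesis by (simp add: power_eq_if)
    qed
    have q4: "4 * q^2 \<le> q^4"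
    proof -
      have "4 \<le> q^2" using power_mono[OF q2, of 2] by simp
      then have "q^2 * 4 \<le> q^2 * q^2" by (rule mult_left_mono) simp
      moreover have "q^2 * q^2 = q^4" by (simp flip: power_add)
      ultimately show ?thesis by (simp add: mult.commute)
    qed
    define r where "r = replicate k a"
    define G1 where "G1 = Good r k b m1"
    have lr: "length r = k" unfolding r_def by simp
    have k1: "1 \<le> k" unfolding k_def by simp
    have m1k: "k + 1 \<le> m1" using lk unfolding m1_def by simp
    have c1a: "8*k*q \<le> q^k"
    proof -
      have "8*k*q \<le> 8*q*l" using lk by simp
      also have "\<dots> \<le> q^4 * l" using q8 by simp
      finally show ?thesis using qk by simp
    qed
    have c1b: "4*(m1+1)*q^2 \<le> q^k"
    proof -
      have h: "m1 + 1 \<le> l" using lk k1 unfolding m1_def by simp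
      have "4*(m1+1)*q^2 \<le> 4*l*q^2" using h by (intro mult_le_mono1 mult_le_mono2)
      also have "\<dots> = 4*q^2*l" by simp
      also have "\<dots> \<le> q^4 * l" using q4 by simp
      finally show ?thesis using qk by simp
    qed
    have G1c: "q^(m1-2) \<le> 2 * card G1"
      unfolding G1_def q_def
      by (rule good_half[OF lr k1 m1k _ _ c1a[unfolded q_def] c1b[unfolded q_def]]) (use m1k k_def in auto)
    have G1p: "privileged (r@y@r) \<and> length y = m1" if "y \<in> G1" for y
      by (rule good_priv[OF priv_rep[of k a, folded r_def] lr k1 order.refl _ _ ba _ that[unfolded G1_def]])
        (use m1k k1 in \<open>auto simp: r_def\<close>)
    define U1 where "U1 = (\<lambda>y. r@y@r) ` G1"
    have finG1: "finite G1" unfolding G1_def Good_def by (rule finite_subset[OF _ finite_imageI[OF finite_len]]) auto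
    have cU1: "card U1 = card G1" unfolding U1_def by (rule card_image) (auto simp: inj_on_def)
    have U1p: "privileged u \<and> length u = l \<and> take k u = replicate k a \<and> drop (l-k) u = replicate k a" if uU: "u \<in> U1" for u
    proof -
      obtain y where u: "u = r@y@r" and y: "y \<in> G1" using uU unfolding U1_def by blast
      have "length y = m1" using G1p[OF y] by simp
      then have lu: "length u = l" using u lr lk unfolding m1_def by simp
      have "drop (l-k) u = r" using lu u lr by simp
      then show ?thesis using G1p[OF y] u lu lr unfolding r_def by simp
    qed
    have m2k: "k + 1 \<le> m" and lm: "l \<le> m" and l2: "2 \<le> l" using lk nl k1 unfolding m_def by auto
    have c2a: "8*l*q \<le> q^k" using q8 qk by (metis mult.assoc mult.commute mult_le_mono1 le_trans)
    have c2b: "4*(m+1)*q^2 \<le> q^l"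
    proof -
      have h: "m + 1 \<le> n" using nl lk unfolding m_def by simp
      have "4*(m+1)*q^2 \<le> 4*n*q^2" using h by (intro mult_le_mono1 mult_le_mono2)
      also have "\<dots> = 4*q^2*n" by simp
      also have "\<dots> \<le> q^4 * n" using q4 by simp
      finally show ?thesis using ql by simp
    qed
    define W where "W = (\<lambda>(u,v). u@v@u) ` (SIGMA u:U1. Good u k b m)"
    have finGood: "finite (Good u k b m)" for u unfolding Good_def by (rule finite_subset[OF _ finite_imageI[OF finite_len]]) auto
    have Gc: "q^(m-2) \<le> 2 * card (Good u k b m)" if "u \<in> U1" for u
      unfolding q_def
      by (rule good_half[OF _ k1 m2k l2 lm c2a[unfolded q_def] c2b[unfolded q_def]]) (use U1p[OF that] in simp)
    have Gp: "privileged (u@v@u) \<and> length v = m" if "u \<in> U1" "v \<in> Good u k b m" for u v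
      using U1p[OF that(1)] k1 lk m2k
      by (intro good_priv[OF _ _ k1 _ _ _ ba _ that(2), of l]) auto
    have injW: "inj_on (\<lambda>(u,v). u@v@u) (SIGMA u:U1. Good u k b m)"
    proof (rule inj_onI, clarify)
      fix u v u' v' assume a1: "u \<in> U1" "v \<in> Good u k b m" "u' \<in> U1" "v' \<in> Good u' k b m"
        and eq: "u @ v @ u = u' @ v' @ u'"
      have "length u = length u'" using U1p[OF a1(1)] U1p[OF a1(3)] by simp
      then show "u = u' \<and> v = v'" using eq by simp
    qed
    have cW: "card W = (\<Sum>u\<in>U1. card (Good u k b m))"
    proof -
      have "card W = card (SIGMA u:U1. Good u k b m)" unfolding W_def by (rule card_image[OF injW])
      also have "\<dots> = (\<Sum>u\<in>U1. card (Good u k b m))"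
        by (rule card_SigmaI) (use finG1 finGood U1_def in auto)
      finally show ?thesis .
    qed
    have "card U1 * q^(m-2) \<le> 2 * card W"
    proof -
      have "(\<Sum>u\<in>U1. q^(m-2)) \<le> (\<Sum>u\<in>U1. 2 * card (Good u k b m))" by (rule sum_mono) (rule Gc)
      then show ?thesis unfolding cW by (simp add: sum_distrib_left)
    qed
    then have W4: "q^(m1-2) * q^(m-2) \<le> 4 * card W"
    proof -
      have "q^(m1-2) * q^(m-2) \<le> (2 * card U1) * q^(m-2)" using G1c cU1 by (intro mult_le_mono1) simp
      also have "\<dots> = 2 * (card U1 * q^(m-2))" by simp
      also have "\<dots> \<le> 2 * (2 * card W)" using \<open>card U1 * q^(m-2) \<le> 2 * card W\<close> by (rule mult_le_mono2)
      finally show ?thesis by simp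
    qed
    have Wsub: "W \<subseteq> {w :: 'a list. length w = n \<and> privileged w}"
    proof
      fix w assume "w \<in> W"
      then obtain u v where w: "w = u@v@u" and u: "u \<in> U1" and v: "v \<in> Good u k b m" unfolding W_def by auto
      show "w \<in> {w :: 'a list. length w = n \<and> privileged w}"
        using Gp[OF u v] U1p[OF u] w nl unfolding m_def by auto
    qed
    have fin: "finite {w :: 'a list. length w = n \<and> privileged w}"
      by (rule finite_subset[OF _ finite_len[of n]]) auto
    have cWle: "card W \<le> card {w :: 'a list. length w = n \<and> privileged w}" by (rule card_mono[OF fin Wsub])
    have expo: "n = (m1 - 2 + (m - 2)) + (l + 2*s + 14)"
      using lk nl unfolding m1_def m_def k_def by simp
    have ql5: "q^l \<le> q^5 * n"
    proof -
      have "l = 5 + t" unfolding l_def by simp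
      then have "q^l = q^5 * q^t" by (metis power_add)
      then show ?thesis using t1 by simp
    qed
    have qs2: "q^(2*s) \<le> l^2"
    proof -
      have "q^(2*s) = (q^s)^2" by (simp add: power_mult mult.commute[of 2 s])
      also have "\<dots> \<le> l^2" using s1 by (rule power_mono) simp
      finally show ?thesis .
    qed
    have A: "q^l * q^(2*s) * q^14 \<le> q^19 * n * l^2"
    proof -
      have "q^l * q^(2*s) * q^14 \<le> (q^5*n) * l^2 * q^14"
        by (rule mult_le_mono[OF mult_le_mono[OF ql5 qs2] order.refl])
      also have "q^19 = q^5 * q^14" by (simp flip: power_add)
      then have "(q^5*n) * l^2 * q^14 = q^19 * n * l^2" by (simp add: mult_ac)
      finally show ?thesis .
    qed
    have qn: "q^n = q^(m1-2) * q^(m-2) * (q^l * q^(2*s) * q^14)"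
      by (subst expo) (simp only: power_add)
    have key: "q^n \<le> 4 * card W * (q^19 * n * l^2)"
      unfolding qn by (rule mult_le_mono[OF W4 A])
    have tlog: "real t \<le> log (real q) (real n)"
    proof (rule le_log_of_power)
      show "real q ^ t \<le> real n" using t1 by (metis of_nat_le_iff of_nat_power)
      show "1 < real q" using q2 by simp
    qed
    have lt: "real l \<le> 6 * log (real q) (real n)" using tlog t29 unfolding l_def by simp
    have lpos: "0 < log (real q) (real n)" using tlog t29 by simp
    have "real (q^n) \<le> real (4 * card W * (q^19 * n * l^2))" using key by (simp only: of_nat_le_iff)
    then have "real q^n \<le> 4 * real (card W) * (real q^19 * real n * real l^2)" by simp
    also have "\<dots> \<le> 4 * real (card W) * (real q^19 * real n * (6 * log (real q) (real n))^2)"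
      using lt by (intro mult_left_mono power_mono) auto
    also have "(6 * log (real q) (real n))^2 = 36 * (log (real q) (real n))^2" by (simp add: power2_eq_square)
    finally have k2: "real q^n \<le> real (card W) * (144 * real q^19) * (real n * (log (real q) (real n))^2)"
      by (simp add: mult_ac)
    have D: "0 < real n * (log (real q) (real n))^2" using lpos n1 by simp
    have "c * real q ^ n / (real n * (log (real q) (real n))\<^sup>2) \<le> real (card W)"
    proof -
      define E where "E = 144 * real q^19 * (real n * (log (real q) (real n))^2)"
      have Ep: "0 < E" unfolding E_def using D q2 by simp
      have "c * real q ^ n / (real n * (log (real q) (real n))\<^sup>2) = real q^n / E"
        unfolding c_def E_def by simp
      also have "\<dots> \<le> real (card W)" using k2 Ep by (simp add: pos_divide_le_eq E_def mult_ac)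
      finally show ?thesis .
    qed
    also have "\<dots> \<le> real (card {w :: 'a list. length w = n \<and> privileged w})" using cWle by simp
    finally show ?thesis .
  qed
  show ?thesis using cpos main unfolding q_def by blast
qed

end
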